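(* Let $\mathcal{I}$ be a $\mathrm{T}$-yardstick. Then there exists a unique positive integer $N$ such that (i) for all $t\in\mathrm{T}$, $\mathsf{end}_t^{\mathcal{I}}$ is $s^N$-reachable from $\mathsf{md}^{\mathcal{I}}$, and (ii) for all $t\in\mathrm{T}$, $\mathsf{end}_t^{\mathcal{I}}$ is $s^{N-1}$-reachable from $\mathsf{md}_t^{\mathcal{I}}$.
   Context: Let $r,s$ be role names, $r^{\#}s^{\#}:=\{r^ns^n\mid n\in\mathbb{N}\}$, and for a language $\mathcal{L}$ over $\{r,s\}$, $e$ is $\mathcal{L}$-reachable from $d$ in an interpretation $\mathcal{I}$ if there is a sequence of elements from $d$ to $e$ whose consecutive pairs are connected by the roles spelling a word of $\mathcal{L}$. Let $\mathrm{T}$ be a finite non-empty set and $N_{\mathrm{T}}:=\{\mathsf{st},\mathsf{md},\mathsf{md}_t,\mathsf{end}_t\mid t\in\mathrm{T}\}$ pairwise distinct individual names. A $\mathrm{T}$-yardstick is an interpretation $\mathcal{I}$ such that: (YNom) the $N_{\mathrm{T}}$-named elements are pairwise different and $(r+s)^*$-reachable from $\mathsf{st}^{\mathcal{I}}$; (YNoLoop) no $N_{\mathrm{T}}$-named element can $(r+s)^+$-reach itself; (YMid) $\mathsf{md}^{\mathcal{I}}$ is the unique element $r^*$-reachable from $\mathsf{st}^{\mathcal{I}}$ that has an $s$-successor; (YSuccOfMid) the $s$-successors of $\mathsf{md}^{\mathcal{I}}$ are exactly the elements $\mathsf{md}_t^{\mathcal{I}}$, $t\in\mathrm{T}$; (YReachMidT)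 for every $t$, $\mathsf{md}_t^{\mathcal{I}}$ can $s^*$-reach $\mathsf{end}_t^{\mathcal{I}}$ but cannot $s^*$-reach $\mathsf{end}_{t'}^{\mathcal{I}}$ for $t'\neq t$; (YEqDst) the elements $r^{\#}s^{\#}$-reachable from $\mathsf{st}^{\mathcal{I}}$ are exactly the elements $\mathsf{end}_t^{\mathcal{I}}$, $t\in\mathrm{T}$; (YNoEqDst) no element $\mathsf{end}_t^{\mathcal{I}}$ is $r^{\#}s^{\#}$-reachable from an element that is $(r+s)^+$-reachable from $\mathsf{st}^{\mathcal{I}}$. *)

theory Defs
  imports Main
begin

datatype role = R | S

datatype 't iname = St | Md | MdT 't | EndT 't

record ('d, 't) interp =
  dom :: "'d set"
  rol :: "role \<Rightarrow> ('d \<times> 'd) set"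
  ind :: "'t iname \<Rightarrow> 'd"

definition wf_interp :: "('d, 't) interp \<Rightarrow> bool" where
  "wf_interp I \<longleftrightarrow> dom I \<noteq> {} \<and> (\<forall>a. rol I a \<subseteq> dom I \<times> dom I) \<and> (\<forall>n. ind I n \<in> dom I)"

inductive walk :: "('d, 't) interp \<Rightarrow> role list \<Rightarrow> 'd \<Rightarrow> 'd \<Rightarrow> bool" for I where
  walk_nil: "walk I [] d d"
| walk_cons: "(d, d') \<in> rol I a \<Longrightarrow> walk I w d' e \<Longrightarrow> walk I (a # w) d e"

definition reach :: "('d, 't) interp \<Rightarrow> role list set \<Rightarrow> 'd \<Rightarrow> 'd \<Rightarrow> bool" where
  "reach I L d e \<longleftrightarrow> (\<exists>w\<in>L. walk I w d e)"

definition lang_all :: "role list set" where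
  "lang_all = UNIV"
definition lang_plus :: "role list set" where
  "lang_plus = {w. w \<noteq> []}"
definition lang_rstar :: "role list set" where
  "lang_rstar = {w. set w \<subseteq> {R}}"
definition lang_sstar :: "role list set" where
  "lang_sstar = {w. set w \<subseteq> {S}}"
definition lang_rs :: "role list set" where
  "lang_rs = {replicate n R @ replicate n S | n. n \<ge> 1}"
definition lang_spow :: "nat \<Rightarrow> role list set" where
  "lang_spow n = {replicate n S}"

definition named :: "'t set \<Rightarrow> 't iname set" where
  "named T = {St, Md} \<union> MdT ` T \<union> EndT ` T"

definition yardstick :: "'t set \<Rightarrow> ('d, 't) interp \<Rightarrow> bool" where
  "yardstick T I \<longleftrightarrow>
    wf_interp I \<and>
    \<comment> \<open>YNom\<close>
    inj_on (ind I) (named T) \<and>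
    (\<forall>n\<in>named T. reach I lang_all (ind I St) (ind I n)) \<and>
    \<comment> \<open>YNoLoop\<close>
    (\<forall>n\<in>named T. \<not> reach I lang_plus (ind I n) (ind I n)) \<and>
    \<comment> \<open>YMid\<close>
    (reach I lang_rstar (ind I St) (ind I Md) \<and> (\<exists>e. (ind I Md, e) \<in> rol I S) \<and>
     (\<forall>x. reach I lang_rstar (ind I St) x \<and> (\<exists>e. (x, e) \<in> rol I S) \<longrightarrow> x = ind I Md)) \<and>
    \<comment> \<open>YSuccOfMid\<close>
    {e. (ind I Md, e) \<in> rol I S} = (\<lambda>t. ind I (MdT t)) ` T \<and>
    \<comment> \<open>YReachMidT\<close>
    (\<forall>t\<in>T. reach I lang_sstar (ind I (MdT t)) (ind I (EndT t)) \<and>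
       (\<forall>t'\<in>T. t' \<noteq> t \<longrightarrow> \<not> reach I lang_sstar (ind I (MdT t)) (ind I (EndT t')))) \<and>
    \<comment> \<open>YEqDst\<close>
    {e. reach I lang_rs (ind I St) e} = (\<lambda>t. ind I (EndT t)) ` T \<and>
    \<comment> \<open>YNoEqDst\<close>
    (\<forall>t\<in>T. \<forall>x. reach I lang_plus (ind I St) x \<longrightarrow> \<not> reach I lang_rs x (ind I (EndT t)))"

end

theory Submission
  imports Defs
begin

lemma walk_Cons_iff: "walk I (a # w) d e \<longleftrightarrow> (\<exists>d'. (d, d') \<in> rol I a \<and> walk I w d' e)"
  by (auto intro: walk.intros elim: walk.cases)

lemma walk_Nil_iff: "walk I [] d e \<longleftrightarrow> d = e"
  by (auto intro: walk.intros elim: walk.cases)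

lemma walk_append_iff: "walk I (u @ v) d e \<longleftrightarrow> (\<exists>m. walk I u d m \<and> walk I v m e)"
  by (induction u arbitrary: d) (auto simp: walk_Cons_iff walk_Nil_iff)

lemma rep_split: "m \<le> n \<Longrightarrow> replicate n (x::role) = replicate m x @ replicate (n - m) x"
  by (metis le_add_diff_inverse replicate_add)

lemma rep_pos: "n \<ge> 1 \<Longrightarrow> replicate n (x::role) = x # replicate (n - 1) x"
  by (cases n) auto

lemma walk_rep_pos: "walk I (replicate n a) d e \<Longrightarrow> n \<ge> 1 \<Longrightarrow>
  \<exists>y. (d, y) \<in> rol I a \<and> walk I (replicate (n - 1) a) y e"
  by (cases n) (auto simp: walk_Cons_iff)

lemma reachI: "walk I w d e \<Longrightarrow> w \<in> L \<Longrightarrow> reach I L d e"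
  unfolding reach_def by blast

lemma rep_sstar: "replicate n S \<in> lang_sstar"
  unfolding lang_sstar_def by auto

lemma rep_sstar2: "replicate n S @ replicate m S \<in> lang_sstar"
  unfolding lang_sstar_def by auto

lemma rep_rstar: "replicate n R \<in> lang_rstar"
  unfolding lang_rstar_def by auto

lemma rep_plus: "n \<noteq> 0 \<Longrightarrow> replicate n a \<in> lang_plus"
  unfolding lang_plus_def by auto

lemma rep_rs: "n \<ge> 1 \<Longrightarrow> replicate n R @ replicate n S \<in> lang_rs"
  unfolding lang_rs_def by auto

lemma walk_app: "walk I u d m \<Longrightarrow> walk I v m e \<Longrightarrow> walk I (u @ v) d e"
  unfolding walk_append_iff by blast

theorem lemma4p7:
  fixes T :: "'t set" and I :: "('d, 't) interp"
  assumes "finite T" and "T \<noteq> {}"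
    and "yardstick T I"
  shows "\<exists>!N::nat. N > 0 \<and>
           (\<forall>t\<in>T. reach I (lang_spow N) (ind I Md) (ind I (EndT t))) \<and>
           (\<forall>t\<in>T. reach I (lang_spow (N - 1)) (ind I (MdT t)) (ind I (EndT t)))"
proof -
  let ?st = "ind I St" and ?md = "ind I Md"
  note Yall = assms(3)[unfolded yardstick_def]
  have Y1: "\<forall>n\<in>named T. \<not> reach I lang_plus (ind I n) (ind I n)"
    using Yall by (elim conjE) assumption
  have Y2: "\<forall>x. reach I lang_rstar ?st x \<and> (\<exists>e. (x, e) \<in> rol I S) \<longrightarrow> x = ?md"
    using Yall by (elim conjE) assumption
  have Y3: "{e. (?md, e) \<in> rol I S} = (\<lambda>t. ind I (MdT t)) ` T"
    using Yall by (elim conjE) assumption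
  have Y4': "\<forall>t\<in>T. reach I lang_sstar (ind I (MdT t)) (ind I (EndT t)) \<and>
       (\<forall>t'\<in>T. t' \<noteq> t \<longrightarrow> \<not> reach I lang_sstar (ind I (MdT t)) (ind I (EndT t')))"
    using Yall by (elim conjE) assumption
  have Y4: "\<forall>t\<in>T. \<forall>t'\<in>T. t' \<noteq> t \<longrightarrow> \<not> reach I lang_sstar (ind I (MdT t)) (ind I (EndT t'))"
    using Y4' by blast
  have Y5: "{e. reach I lang_rs ?st e} = (\<lambda>t. ind I (EndT t)) ` T"
    using Yall by (elim conjE) assumption
  have Y6: "\<forall>t\<in>T. \<forall>x. reach I lang_plus ?st x \<longrightarrow> \<not> reach I lang_rs x (ind I (EndT t))"
    using Yall by (elim conjE) assumption
  have A: False if "walk I (replicate m R) ?st ?md" "walk I (replicate n S) ?md (ind I (EndT t))"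
    "t \<in> T" "1 \<le> n" "n < m" for m n t
  proof -
    have "replicate m R = replicate (m - n) R @ replicate n R"
      using that(5) by (simp flip: replicate_add)
    with that(1) obtain y where y1: "walk I (replicate (m - n) R) ?st y"
      and y2: "walk I (replicate n R) y ?md"
      by (auto simp only: walk_append_iff)
    have "reach I lang_plus ?st y" using that(5) by (intro reachI[OF y1] rep_plus) auto
    moreover have "reach I lang_rs y (ind I (EndT t))"
      by (rule reachI[OF walk_app[OF y2 that(2)] rep_rs[OF that(4)]])
    ultimately show False using Y6 that(3) by blast
  qed
  have D: "walk I (replicate n R) ?st ?md \<and> walk I (replicate n S) ?md e"
    if "walk I (replicate n R @ replicate n S) ?st e" "n \<ge> 1" for n e
  proof -
    from that(1) obtain x where x1: "walk I (replicate n R) ?st x" and x2: "walk I (replicate n S) x e"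
      by (auto simp only: walk_append_iff)
    from walk_rep_pos[OF x2 that(2)] obtain z where "(x, z) \<in> rol I S"
      by blast
    moreover have "reach I lang_rstar ?st x" using x1 rep_rstar by (rule reachI)
    ultimately have "x = ?md" using Y2 by blast
    thus ?thesis using x1 x2 by simp
  qed
  have E: "\<exists>n\<ge>1. walk I (replicate n R @ replicate n S) ?st (ind I (EndT t))" if "t \<in> T" for t
  proof -
    have "ind I (EndT t) \<in> {e. reach I lang_rs ?st e}" using Y5 that by blast
    thus ?thesis unfolding reach_def lang_rs_def by auto
  qed
  obtain t0 where t0: "t0 \<in> T" using assms(2) by blast
  obtain K where K1: "K \<ge> 1" and KR: "walk I (replicate K R) ?st ?md"
    and KS: "walk I (replicate K S) ?md (ind I (EndT t0))"
    using E[OF t0] D by blast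
  have C: "walk I (replicate K S) ?md (ind I (EndT t))" if tT: "t \<in> T" for t
  proof -
    obtain n where n1: "n \<ge> 1" and nR: "walk I (replicate n R) ?st ?md"
      and nS: "walk I (replicate n S) ?md (ind I (EndT t))"
      using E[OF tT] D by blast
    have "\<not> n < K" using A[OF KR nS tT n1] by blast
    moreover have "\<not> K < n" using A[OF nR KS t0 K1] by blast
    ultimately show ?thesis using nS by simp
  qed
  have C2: "walk I (replicate (K - 1) S) (ind I (MdT t)) (ind I (EndT t))" if "t \<in> T" for t
  proof -
    from walk_rep_pos[OF C[OF that] K1] obtain y where y1: "(?md, y) \<in> rol I S"
      and y2: "walk I (replicate (K - 1) S) y (ind I (EndT t))"
      by blast
    from y1 Y3 obtain t' where t': "t' \<in> T" "y = ind I (MdT t')" by blast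
    have "reach I lang_sstar y (ind I (EndT t))" using y2 rep_sstar by (rule reachI)
    hence "reach I lang_sstar (ind I (MdT t')) (ind I (EndT t))" using t'(2) by simp
    hence "t' = t" using Y4[rule_format, OF t'(1) that] by blast
    thus ?thesis using y2 t' by simp
  qed
  show ?thesis
  proof (rule ex1I[of _ K])
    show "K > 0 \<and> (\<forall>t\<in>T. reach I (lang_spow K) ?md (ind I (EndT t))) \<and>
           (\<forall>t\<in>T. reach I (lang_spow (K - 1)) (ind I (MdT t)) (ind I (EndT t)))"
      using K1 C C2 unfolding reach_def lang_spow_def by auto
  next
    fix N assume N: "N > 0 \<and> (\<forall>t\<in>T. reach I (lang_spow N) ?md (ind I (EndT t))) \<and>
           (\<forall>t\<in>T. reach I (lang_spow (N - 1)) (ind I (MdT t)) (ind I (EndT t)))"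
    hence NS: "walk I (replicate N S) ?md (ind I (EndT t0))" and N1: "N \<ge> 1"
      using t0 unfolding reach_def lang_spow_def by auto
    have "\<not> N < K" using A[OF KR NS t0 N1] by blast
    moreover have False if KN: "K < N"
    proof -
      have "replicate N S = replicate K S @ replicate (N - K) S"
        using KN by (simp add: rep_split)
      with NS obtain y where y1: "walk I (replicate K S) ?md y"
        and y2: "walk I (replicate (N - K) S) y (ind I (EndT t0))"
        by (auto simp only: walk_append_iff)
      have "reach I lang_rs ?st y" 
        by (rule reachI[OF walk_app[OF KR y1] rep_rs[OF K1]])
      with Y5 obtain t' where t': "t' \<in> T" "y = ind I (EndT t')" by blast
      from walk_rep_pos[OF y1 K1] obtain z where z1: "(?md, z) \<in> rol I S"
        and z2: "walk I (replicate (K - 1) S) z y"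
        by blast
      from z1 Y3 obtain t'' where t'': "t'' \<in> T" "z = ind I (MdT t'')" by blast
      have "walk I (replicate (K - 1) S @ replicate (N - K) S) z (ind I (EndT t0))"
        using z2 y2 unfolding walk_append_iff by blast
      hence r1: "reach I lang_sstar z (ind I (EndT t0))" using rep_sstar2 by (rule reachI)
      have r2: "reach I lang_sstar z y" using z2 rep_sstar by (rule reachI)
      show False
      proof (cases "t' = t0")
        case True
        have w: "walk I (replicate (N - K) S) (ind I (EndT t0)) (ind I (EndT t0))"
          using y2 True t'(2) by simp
        have "N - K \<noteq> 0" using KN by simp
        hence "reach I lang_plus (ind I (EndT t0)) (ind I (EndT t0))"
          by (rule reachI[OF w rep_plus])
        moreover have "EndT t0 \<in> named T" using t0 unfolding named_def by blast
        ultimately show False using Y1 by blast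
      next
        case False
        have q1: "reach I lang_sstar (ind I (MdT t'')) (ind I (EndT t0))" using r1 t''(2) by simp
        have q2: "reach I lang_sstar (ind I (MdT t'')) (ind I (EndT t'))" using r2 t''(2) t'(2) by simp
        show False
        proof (cases "t'' = t0")
          case True
          hence "t' \<noteq> t''" using False by simp
          then show False using Y4[rule_format, OF t''(1) t'(1)] q2 by blast
        next
          case False
          hence "t0 \<noteq> t''" by simp
          then show False using Y4[rule_format, OF t''(1) t0] q1 by blast
        qed
      qed
    qed
    ultimately show "N = K" by (meson linorder_neqE_nat)
  qed
qed

end
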